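(* Let $H=([n],E)$ be a hypergraph without loops. For $1\le a\le\#E$ and $b\in\mathbb{N}$ let $s(a,b)$ be the number of $a$-element subsets $S\subseteq E$ such that the hypergraph $([n],S)$ has exactly $b$ connected components (isolated vertices counting as components); set $s(0,n)=1$ and $s(0,b)=0$ for $b\ne n$. Write $T(b,i)=\sum_{c=0}^i(-1)^c\binom{i}{c}(i-c+2)^b$. Then for all $0\le i\le n$ and every $0\le m\le\#E$: \[f_i(\chi_H(k+1))=\sum_{a=0}^{\#E}(-1)^a\sum_{b=0}^n s(a,b)\,T(b,i),\] \[f_i(\chi_H(k+1))\le\sum_{a=0}^{m}(-1)^a\sum_{b=0}^n s(a,b)\,T(b,i)\quad\text{if $m$ is even},\] \[f_i(\chi_H(k+1))\ge\sum_{a=0}^{m}(-1)^a\sum_{b=0}^n s(a,b)\,T(b,i)\quad\text{if $m$ is odd}.\] Moreover, if $l=\min\{\#F: F\in E\}$ and $n-l+2\le i\le n$, then $f_i(\chi_H(k+1))=\sum_{j=0}^i(-1)^j\binom{i}{j}(i-j+2)^n$.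
   Context: A hypergraph $H=([n],E)$ has edges that are nonempty subsets of $[n]$; "without loops" means no edge has cardinality 1; also no edge is properly contained in another. A proper $k$-coloring is a map $[n]\to[k]$ with no monochromatic edge; $\chi_H(k)$ is the number of proper $k$-colorings. For a polynomial $p(k)$ of degree at most $n$, its $f$-vector is defined by $p(k)=\sum_{i=0}^n f_i(p)\binom{k-1}{i}$, $f_{-1}=1$; here $f_i(\chi_H(k+1))$ refers to the polynomial $k\mapsto\chi_H(k+1)$. *)

theory Defs
  imports Main "HOL-Library.FuncSet"
begin

definition hypergraph_noloops :: "nat \<Rightarrow> nat set set \<Rightarrow> bool" where
  "hypergraph_noloops n E \<longleftrightarrow>
     (\<forall>F\<in>E. F \<subseteq> {1..n} \<and> F \<noteq> {} \<and> card F \<noteq> 1) \<and>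
     (\<forall>F\<in>E. \<forall>G\<in>E. F \<subseteq> G \<longrightarrow> F = G)"

definition chrom :: "nat \<Rightarrow> nat set set \<Rightarrow> nat \<Rightarrow> nat" where
  "chrom n E k = card {c \<in> {1..n} \<rightarrow>\<^sub>E {1..k}. \<forall>F\<in>E. \<not> (\<exists>x. \<forall>v\<in>F. c v = x)}"

text \<open>f-vector of a polynomial p of degree at most n:
  p(k) = sum_{i=0}^n f_i(p) * binom(k-1, i) (polynomial identity; it suffices, and is equivalent, to require it at all integers k >= 1,
  which determines the coefficients uniquely).\<close>
definition fvec :: "nat \<Rightarrow> (nat \<Rightarrow> int) \<Rightarrow> nat \<Rightarrow> int" where
  "fvec n p = (THE f. (\<forall>j>n. f j = 0) \<and>
      (\<forall>k::nat. k \<ge> 1 \<longrightarrow> p k = (\<Sum>j\<le>n. f j * int ((k - 1) choose j))))"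

definition ncomp :: "nat \<Rightarrow> nat set set \<Rightarrow> nat" where
  "ncomp n S = card ({1..n} // ({(u, v). \<exists>F\<in>S. u \<in> F \<and> v \<in> F}\<^sup>*))"

definition scount :: "nat \<Rightarrow> nat set set \<Rightarrow> nat \<Rightarrow> nat \<Rightarrow> nat" where
  "scount n E a b = (if a = 0 then (if b = n then 1 else 0)
      else card {S. S \<subseteq> E \<and> card S = a \<and> ncomp n S = b})"

definition Tcoef :: "nat \<Rightarrow> nat \<Rightarrow> int" where
  "Tcoef b i = (\<Sum>c=0..i. (-1)^c * int (i choose c) * (int i - int c + 2)^b)"

end

theory Submission
  imports Defs
begin



lemma alt_sum:
  assumes "t \<ge> 1"
  shows "(\<Sum>a\<le>m. (-1)^a * int (t choose a)) = (-1)^m * int ((t-1) choose m)"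
proof (induction m)
  case 0 then show ?case by simp
next
  case (Suc m)
  obtain s where t: "t = Suc s" using assms by (cases t) auto
  have "(\<Sum>a\<le>Suc m. (-1)^a * int (t choose a)) = (-1)^m * int (s choose m) + (-1)^(Suc m) * int (t choose Suc m)"
    using Suc t by simp
  also have "\<dots> = (-1)^Suc m * int (s choose Suc m)"
    by (simp add: t algebra_simps)
  finally show ?case by (simp add: t)
qed

lemma alt_sum0:
  "(\<Sum>a\<le>m. (-1)^a * int (0 choose a)) = 1"
  by (induction m) auto

lemma card_ind: "finite U \<Longrightarrow> int (card {x\<in>U. Q x}) = (\<Sum>x\<in>U. if Q x then 1 else 0)"
  by (simp add: sum.If_cases Int_def)

lemma bonf:
  fixes U :: "'a set" and I :: "'b set" and A :: "'b \<Rightarrow> 'a set"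
  assumes fU: "finite U" and fI: "finite I"
  shows "(\<Sum>a=0..m. (-1)^a * (\<Sum>J\<in>{J. J\<subseteq>I \<and> card J = a}. int (card {x\<in>U. \<forall>j\<in>J. x\<in>A j})))
       = int (card {x\<in>U. \<forall>j\<in>I. x \<notin> A j})
         + (\<Sum>x\<in>{x\<in>U. \<not>(\<forall>j\<in>I. x \<notin> A j)}. (-1)^m * int ((card {j\<in>I. x\<in>A j} - 1) choose m))"
proof -
  define T where "T x = {j\<in>I. x\<in>A j}" for x
  have fT: "finite (T x)" for x using fI by (simp add: T_def)
  have fJ: "finite {J. J\<subseteq>I \<and> card J = a}" for a using fI by simp
  have inner: "(\<Sum>J\<in>{J. J\<subseteq>I \<and> card J = a}. int (card {x\<in>U. \<forall>j\<in>J. x\<in>A j}))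
      = (\<Sum>x\<in>U. int (card (T x) choose a))" for a
  proof -
    have "(\<Sum>J\<in>{J. J\<subseteq>I \<and> card J = a}. int (card {x\<in>U. \<forall>j\<in>J. x\<in>A j}))
       = (\<Sum>J\<in>{J. J\<subseteq>I \<and> card J = a}. \<Sum>x\<in>U. if (\<forall>j\<in>J. x\<in>A j) then 1 else 0)"
      using fU by (simp add: card_ind)
    also have "\<dots> = (\<Sum>x\<in>U. \<Sum>J\<in>{J. J\<subseteq>I \<and> card J = a}. if (\<forall>j\<in>J. x\<in>A j) then 1 else 0)"
      by (rule sum.swap)
    also have "\<dots> = (\<Sum>x\<in>U. int (card {J\<in>{J. J\<subseteq>I \<and> card J = a}. \<forall>j\<in>J. x\<in>A j}))"
      by (rule sum.cong[OF refl], subst card_ind[OF fJ], rule refl)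
    also have "\<dots> = (\<Sum>x\<in>U. int (card (T x) choose a))"
    proof (rule sum.cong[OF refl])
      fix x
      have "{J\<in>{J. J\<subseteq>I \<and> card J = a}. \<forall>j\<in>J. x\<in>A j} = {J. J \<subseteq> T x \<and> card J = a}"
        by (auto simp: T_def)
      then show "int (card {J\<in>{J. J\<subseteq>I \<and> card J = a}. \<forall>j\<in>J. x\<in>A j}) = int (card (T x) choose a)"
        using n_subsets[OF fT] by simp
    qed
    finally show ?thesis .
  qed
  have "(\<Sum>a=0..m. (-1)^a * (\<Sum>J\<in>{J. J\<subseteq>I \<and> card J = a}. int (card {x\<in>U. \<forall>j\<in>J. x\<in>A j})))
      = (\<Sum>a\<le>m. \<Sum>x\<in>U. (-1)^a * int (card (T x) choose a))"
    by (simp add: inner atLeast0AtMost sum_distrib_left)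
  also have "\<dots> = (\<Sum>x\<in>U. \<Sum>a\<le>m. (-1)^a * int (card (T x) choose a))"
    by (rule sum.swap)
  also have "\<dots> = (\<Sum>x\<in>U. if (\<forall>j\<in>I. x \<notin> A j) then 1 else (-1)^m * int ((card (T x) - 1) choose m))"
  proof (rule sum.cong[OF refl])
    fix x
    show "(\<Sum>a\<le>m. (-1)^a * int (card (T x) choose a)) = (if (\<forall>j\<in>I. x \<notin> A j) then 1 else (-1)^m * int ((card (T x) - 1) choose m))"
    proof (cases "\<forall>j\<in>I. x \<notin> A j")
      case True
      then have "T x = {}" by (auto simp: T_def)
      then show ?thesis using True alt_sum0 by simp
    next
      case False
      then have "T x \<noteq> {}" by (auto simp: T_def)
      then have "card (T x) \<ge> 1" using fT by (simp add: Suc_le_eq card_gt_0_iff)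
      then show ?thesis using False alt_sum by auto
    qed
  qed
  also have "\<dots> = (\<Sum>x\<in>{x\<in>U. \<forall>j\<in>I. x \<notin> A j}. 1) + (\<Sum>x\<in>{x\<in>U. \<not>(\<forall>j\<in>I. x \<notin> A j)}. (-1)^m * int ((card (T x) - 1) choose m))"
    using fU by (simp add: sum.If_cases Int_def Compl_eq)
  finally show ?thesis by (simp add: T_def)
qed

lemma bonf_exact:
  fixes U :: "'a set" and I :: "'b set" and A :: "'b \<Rightarrow> 'a set"
  assumes fU: "finite U" and fI: "finite I"
  shows "(\<Sum>a=0..card I. (-1)^a * (\<Sum>J\<in>{J. J\<subseteq>I \<and> card J = a}. int (card {x\<in>U. \<forall>j\<in>J. x\<in>A j})))
       = int (card {x\<in>U. \<forall>j\<in>I. x \<notin> A j})"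
proof -
  have "card {j\<in>I. x\<in>A j} - 1 < card I" if "\<not>(\<forall>j\<in>I. x \<notin> A j)" for x
  proof -
    have "card {j\<in>I. x\<in>A j} \<le> card I" using fI by (intro card_mono) auto
    moreover have "card {j\<in>I. x\<in>A j} > 0" using that fI by (auto simp: card_gt_0_iff)
    ultimately show ?thesis by simp
  qed
  then have "(\<Sum>x\<in>{x\<in>U. \<not>(\<forall>j\<in>I. x \<notin> A j)}. (-1)^card I * int ((card {j\<in>I. x\<in>A j} - 1) choose card I)) = 0"
    by (intro sum.neutral) (simp add: binomial_eq_0)
  then show ?thesis using bonf[OF fU fI, of A "card I"] by simp
qed

lemma bonf_even:
  fixes U :: "'a set" and I :: "'b set" and A :: "'b \<Rightarrow> 'a set"
  assumes fU: "finite U" and fI: "finite I" and "even m"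
  shows "(\<Sum>a=0..m. (-1)^a * (\<Sum>J\<in>{J. J\<subseteq>I \<and> card J = a}. int (card {x\<in>U. \<forall>j\<in>J. x\<in>A j})))
       \<ge> int (card {x\<in>U. \<forall>j\<in>I. x \<notin> A j})"
  using bonf[OF fU fI, of A m] assms(3) by (simp add: sum_nonneg)

lemma bonf_odd:
  fixes U :: "'a set" and I :: "'b set" and A :: "'b \<Rightarrow> 'a set"
  assumes fU: "finite U" and fI: "finite I" and "odd m"
  shows "(\<Sum>a=0..m. (-1)^a * (\<Sum>J\<in>{J. J\<subseteq>I \<and> card J = a}. int (card {x\<in>U. \<forall>j\<in>J. x\<in>A j})))
       \<le> int (card {x\<in>U. \<forall>j\<in>I. x \<notin> A j})"
  using bonf[OF fU fI, of A m] assms(3) by (simp add: sum_nonpos)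



definition Tr :: "nat \<Rightarrow> nat \<Rightarrow> nat \<Rightarrow> int" where
  "Tr r b i = (\<Sum>c=0..i. (-1)^c * int (i choose c) * (int r + int i - int c)^b)"

lemma cover_count:
  assumes fB: "finite B"
  shows "int (card {f \<in> B \<rightarrow>\<^sub>E {1..r+i}. {r+1..r+i} \<subseteq> f ` B}) = Tr r (card B) i"
proof -
  define U where "U = B \<rightarrow>\<^sub>E {1..r+i}"
  define I where "I = {r+1..r+i}"
  define A where "A j = {f. j \<notin> f ` B}" for j :: nat
  have fU: "finite U" unfolding U_def using fB by (simp add: finite_PiE)
  have fI: "finite I" unfolding I_def by simp
  have cI: "card I = i" unfolding I_def by simp
  have e1: "{f\<in>U. \<forall>j\<in>I. f \<notin> A j} = {f \<in> B \<rightarrow>\<^sub>E {1..r+i}. {r+1..r+i} \<subseteq> f ` B}"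
    unfolding U_def I_def A_def by auto
  have inner: "(\<Sum>J\<in>{J. J\<subseteq>I \<and> card J = a}. int (card {f\<in>U. \<forall>j\<in>J. f\<in>A j}))
      = int (i choose a) * (int r + int i - int a)^card B" if "a \<le> i" for a
  proof -
    have "int (card {f\<in>U. \<forall>j\<in>J. f\<in>A j}) = (int r + int i - int a)^card B"
      if J: "J \<in> {J. J\<subseteq>I \<and> card J = a}" for J
    proof -
      have JI: "J \<subseteq> I" "card J = a" using J by auto
      have "{f\<in>U. \<forall>j\<in>J. f\<in>A j} = B \<rightarrow>\<^sub>E ({1..r+i} - J)"
        unfolding U_def A_def by (auto simp: PiE_def Pi_def)
      moreover have "card ({1..r+i} - J) = r + i - a"
        using JI fI unfolding I_def by (subst card_Diff_subset) (auto intro: finite_subset)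
      ultimately have "card {f\<in>U. \<forall>j\<in>J. f\<in>A j} = (r + i - a)^card B"
        using fB by (simp add: card_PiE)
      moreover have "int (r + i - a) = int r + int i - int a" using that \<open>a \<le> i\<close> by simp
      ultimately show ?thesis by simp
    qed
    then have "(\<Sum>J\<in>{J. J\<subseteq>I \<and> card J = a}. int (card {f\<in>U. \<forall>j\<in>J. f\<in>A j}))
        = (\<Sum>J\<in>{J. J\<subseteq>I \<and> card J = a}. (int r + int i - int a)^card B)"
      by (rule sum.cong[OF refl])
    also have "\<dots> = int (card {J. J\<subseteq>I \<and> card J = a}) * (int r + int i - int a)^card B"
      by simp
    finally show ?thesis using n_subsets[OF fI] cI by simp
  qed
  have "int (card {f\<in>U. \<forall>j\<in>I. f \<notin> A j})
      = (\<Sum>a=0..card I. (-1)^a * (\<Sum>J\<in>{J. J\<subseteq>I \<and> card J = a}. int (card {f\<in>U. \<forall>j\<in>J. f\<in>A j})))"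
    using bonf_exact[OF fU fI, of A] by simp
  also have "\<dots> = Tr r (card B) i"
    unfolding Tr_def cI by (intro sum.cong refl) (simp add: inner)
  finally show ?thesis using e1 by simp
qed

lemma Tr_zero:
  assumes "b < i" shows "Tr r b i = 0"
proof -
  have "{f \<in> {..<b} \<rightarrow>\<^sub>E {1..r+i}. {r+1..r+i} \<subseteq> f ` {..<b}} = {}"
  proof (rule ccontr)
    assume "\<not> ?thesis"
    then obtain f where "{r+1..r+i} \<subseteq> f ` {..<b}" by auto
    then have "card {r+1..r+i} \<le> card (f ` {..<b})" by (intro card_mono) auto
    also have "\<dots> \<le> b" using card_image_le[of "{..<b}" f] by simp
    finally show False using assms by simp
  qed
  then show ?thesis using cover_count[OF finite_lessThan, of b r i] by (simp only: card.empty of_nat_0 card_lessThan)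
qed

lemma Tr_atMost: "Tr r b i = (\<Sum>c\<le>i. (-1)^c * int (i choose c) * (int r + int i - int c)^b)"
  by (simp add: Tr_def atLeast0AtMost)

lemma Tr_Suc: "Tr r b (Suc i) = Tr (Suc r) b i - Tr r b i"
proof -
  have "Tr r b (Suc i) = (int r + int i + 1)^b
     + (\<Sum>c\<le>i. (-1)^(Suc c) * int (Suc i choose Suc c) * (int r + int i - int c)^b)"
    unfolding Tr_atMost by (subst sum.atMost_Suc_shift) (simp add: algebra_simps)
  also have "\<dots> = (int r + int i + 1)^b
     - (\<Sum>c\<le>i. (-1)^c * int (i choose Suc c) * (int r + int i - int c)^b)
     - (\<Sum>c\<le>i. (-1)^c * int (i choose c) * (int r + int i - int c)^b)"
  proof -
    have "(\<Sum>c\<le>i. (-1)^(Suc c) * int (Suc i choose Suc c) * (int r + int i - int c)^b)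
      = (\<Sum>c\<le>i. - ((-1)^c * int (i choose Suc c) * (int r + int i - int c)^b) - (-1)^c * int (i choose c) * (int r + int i - int c)^b)"
      by (intro sum.cong refl) (simp add: algebra_simps)
    also have "\<dots> = - (\<Sum>c\<le>i. (-1)^c * int (i choose Suc c) * (int r + int i - int c)^b)
     - (\<Sum>c\<le>i. (-1)^c * int (i choose c) * (int r + int i - int c)^b)"
      by (simp add: sum_subtractf sum_negf)
    finally show ?thesis by simp
  qed
  also have "(int r + int i + 1)^b - (\<Sum>c\<le>i. (-1)^c * int (i choose Suc c) * (int r + int i - int c)^b)
      = (\<Sum>c\<le>Suc i. (-1)^c * int (i choose c) * (int (Suc r) + int i - int c)^b)"
    by (subst sum.atMost_Suc_shift) (simp add: algebra_simps sum_negf)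
  also have "\<dots> = Tr (Suc r) b i"
    unfolding Tr_atMost by simp
  finally show ?thesis unfolding Tr_atMost by simp
qed

lemma sum_choose0: "(\<Sum>j\<le>n. g j * int (0 choose j)) = (g 0 :: int)"
  by (induction n) auto

lemma choose_Suc': "int (Suc x choose j) = int (x choose j) + (if j = 0 then 0 else int (x choose (j - 1)))"
  by (cases j) auto

lemma newton:
  assumes "b \<le> n"
  shows "(int x + int r)^b = (\<Sum>j\<le>n. Tr r b j * int (x choose j))"
proof (induction x arbitrary: r)
  case 0
  then show ?case by (simp add: sum_choose0 Tr_def)
next
  case (Suc x)
  define D where "D = (\<Sum>j\<le>n. Tr r b (Suc j) * int (x choose j))"
  have z: "Tr r b (Suc n) = 0" using assms by (intro Tr_zero) simp
  have "(int (Suc x) + int r)^b = (int x + int (Suc r))^b" by (simp add: algebra_simps)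
  also have "\<dots> = (\<Sum>j\<le>n. Tr (Suc r) b j * int (x choose j))" by (rule Suc.IH)
  also have "\<dots> = (\<Sum>j\<le>n. Tr r b j * int (x choose j)) + D"
    unfolding D_def by (simp add: Tr_Suc sum.distrib[symmetric] algebra_simps)
  also have "\<dots> = (\<Sum>j\<le>Suc n. Tr r b j * int (x choose j))
      + (\<Sum>j\<le>Suc n. Tr r b j * (if j = 0 then 0 else int (x choose (j - 1))))"
  proof -
    have "(\<Sum>j\<le>Suc n. Tr r b j * (if j = 0 then 0 else int (x choose (j - 1)))) = D"
      unfolding D_def by (subst sum.atMost_Suc_shift) simp
    moreover have "(\<Sum>j\<le>Suc n. Tr r b j * int (x choose j)) = (\<Sum>j\<le>n. Tr r b j * int (x choose j))"
      by (simp add: z)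
    ultimately show ?thesis by simp
  qed
  also have "\<dots> = (\<Sum>j\<le>Suc n. Tr r b j * int (Suc x choose j))"
    by (simp add: choose_Suc' sum.distrib[symmetric] algebra_simps del: sum.atMost_Suc)
  also have "\<dots> = (\<Sum>j\<le>n. Tr r b j * int (Suc x choose j))"
    by (simp add: z)
  finally show ?case .
qed

lemma Tcoef_Tr: "Tcoef b i = Tr 2 b i"
  unfolding Tcoef_def Tr_def by (intro sum.cong refl) (simp add: algebra_simps)



definition Rel :: "nat set set \<Rightarrow> (nat \<times> nat) set" where
  "Rel S = {(u, v). \<exists>F\<in>S. u \<in> F \<and> v \<in> F}"

lemma ncomp_Rel: "ncomp n S = card ({1..n} // (Rel S)\<^sup>*)"
  by (simp add: ncomp_def Rel_def)

lemma equiv_Rel: "equiv UNIV ((Rel S)\<^sup>*)"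
proof -
  have "sym (Rel S)" unfolding Rel_def sym_def by auto
  then show ?thesis unfolding equiv_def
    by (simp add: refl_rtrancl sym_rtrancl trans_rtrancl)
qed

lemma quot_image: "A // r = (\<lambda>v. r``{v}) ` A"
  unfolding quotient_def by auto

lemma Rel_closed:
  assumes SF: "\<forall>F\<in>S. F \<subseteq> {1..n}" and uv: "(u, v) \<in> (Rel S)\<^sup>*" and u: "u \<in> {1..n}"
  shows "v \<in> {1..n}"
  using uv u
proof (induction rule: rtrancl_induct)
  case base then show ?case .
next
  case (step y z)
  then obtain F where "F \<in> S" "z \<in> F" unfolding Rel_def by auto
  then show ?case using SF by blast
qed

lemma Rel_const:
  assumes uv: "(u, v) \<in> (Rel S)\<^sup>*" and c: "\<forall>F\<in>S. \<exists>x. \<forall>w\<in>F. c w = x"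
  shows "c u = c v"
  using uv
proof (induction rule: rtrancl_induct)
  case base then show ?case by simp
next
  case (step y z)
  then obtain F where F: "F \<in> S" "y \<in> F" "z \<in> F" unfolding Rel_def by auto
  then obtain x where "\<forall>w\<in>F. c w = x" using c by blast
  then show ?case using step F by simp
qed

lemma comp_bij:
  assumes SF: "\<forall>F\<in>S. F \<subseteq> {1..n} \<and> F \<noteq> {}"
  shows "card {c \<in> {1..n} \<rightarrow>\<^sub>E K. (\<forall>F\<in>S. \<exists>x. \<forall>v\<in>F. c v = x) \<and> Z \<subseteq> c ` {1..n}}
       = card {h \<in> ({1..n} // (Rel S)\<^sup>*) \<rightarrow>\<^sub>E K. Z \<subseteq> h ` ({1..n} // (Rel S)\<^sup>*)}"
proof -
  define R where "R = (Rel S)\<^sup>*"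
  define Q where "Q = {1..n} // R"
  define phi where "phi h = (\<lambda>v\<in>{1..n}. h (R``{v}))" for h :: "nat set \<Rightarrow> 'a"
  define D where "D = {h \<in> Q \<rightarrow>\<^sub>E K. Z \<subseteq> h ` Q}"
  define C where "C = {c \<in> {1..n} \<rightarrow>\<^sub>E K. (\<forall>F\<in>S. \<exists>x. \<forall>v\<in>F. c v = x) \<and> Z \<subseteq> c ` {1..n}}"
  have eq: "equiv UNIV R" unfolding R_def by (rule equiv_Rel)
  have Qim: "Q = (\<lambda>v. R``{v}) ` {1..n}" unfolding Q_def by (rule quot_image)
  have SF1: "\<forall>F\<in>S. F \<subseteq> {1..n}" using SF by auto
  have RS: "Rel S \<subseteq> R" unfolding R_def by auto
  have phim: "phi h ` {1..n} = h ` Q" for h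
    unfolding phi_def Qim by (auto simp: image_image)
  have inj: "inj_on phi D"
  proof (rule inj_onI)
    fix h1 h2 assume h1: "h1 \<in> D" and h2: "h2 \<in> D" and e: "phi h1 = phi h2"
    show "h1 = h2"
    proof (rule PiE_ext)
      show "h1 \<in> Q \<rightarrow>\<^sub>E K" "h2 \<in> Q \<rightarrow>\<^sub>E K" using h1 h2 unfolding D_def by auto
      fix q assume "q \<in> Q"
      then obtain v where v: "v \<in> {1..n}" "q = R``{v}" using Qim by auto
      have "phi h1 v = phi h2 v" using e by simp
      then show "h1 q = h2 q" using v unfolding phi_def by simp
    qed
  qed
  have img: "phi ` D = C"
  proof
    show "phi ` D \<subseteq> C"
    proof
      fix c assume "c \<in> phi ` D"
      then obtain h where h: "h \<in> D" and c: "c = phi h" by auto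
      have hK: "h \<in> Q \<rightarrow>\<^sub>E K" and hZ: "Z \<subseteq> h ` Q" using h unfolding D_def by auto
      have "c \<in> {1..n} \<rightarrow>\<^sub>E K"
        unfolding c phi_def using hK Qim by auto
      moreover have "\<forall>F\<in>S. \<exists>x. \<forall>v\<in>F. c v = x"
      proof
        fix F assume F: "F \<in> S"
        then obtain u where u: "u \<in> F" using SF by auto
        have "\<forall>v\<in>F. c v = c u"
        proof
          fix v assume v: "v \<in> F"
          have "(u, v) \<in> R" using RS F u v unfolding Rel_def by auto
          then have "R``{u} = R``{v}" using equiv_class_eq_iff[OF eq] by blast
          moreover have "u \<in> {1..n}" "v \<in> {1..n}" using SF1 F u v by blast+
          ultimately show "c v = c u" unfolding c phi_def by simp
        qed
        then show "\<exists>x. \<forall>v\<in>F. c v = x" by blast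
      qed
      moreover have "Z \<subseteq> c ` {1..n}" using hZ phim c by simp
      ultimately show "c \<in> C" unfolding C_def by blast
    qed
  next
    show "C \<subseteq> phi ` D"
    proof
      fix c assume cC: "c \<in> C"
      have cK: "c \<in> {1..n} \<rightarrow>\<^sub>E K" and cm: "\<forall>F\<in>S. \<exists>x. \<forall>v\<in>F. c v = x" and cZ: "Z \<subseteq> c ` {1..n}"
        using cC unfolding C_def by auto
      define h where "h = (\<lambda>q\<in>Q. c (SOME v. v \<in> q))"
      have hv: "h (R``{v}) = c v" if v: "v \<in> {1..n}" for v
      proof -
        have inQ: "R``{v} \<in> Q" using Qim v by auto
        have "v \<in> R``{v}" using eq unfolding equiv_def refl_on_def by auto
        then have "(SOME w. w \<in> R``{v}) \<in> R``{v}" by (rule someI)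
        then have "(v, SOME w. w \<in> R``{v}) \<in> R" by simp
        then have "c v = c (SOME w. w \<in> R``{v})" using Rel_const cm unfolding R_def by blast
        then show ?thesis unfolding h_def using inQ by simp
      qed
      have hK: "h \<in> Q \<rightarrow>\<^sub>E K"
      proof -
        have "h q \<in> K" if "q \<in> Q" for q
        proof -
          obtain v where v: "v \<in> {1..n}" "q = R``{v}" using \<open>q \<in> Q\<close> Qim by auto
          then show ?thesis using hv cK by auto
        qed
        then show ?thesis unfolding h_def by auto
      qed
      have ph: "phi h = c"
      proof (rule PiE_ext)
        show "phi h \<in> {1..n} \<rightarrow>\<^sub>E K" unfolding phi_def using hK Qim by auto
        show "c \<in> {1..n} \<rightarrow>\<^sub>E K" by (rule cK)
        fix v assume "v \<in> {1..n}" then show "phi h v = c v" unfolding phi_def using hv by simp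
      qed
      have "Z \<subseteq> h ` Q" using cZ phim[of h] ph by simp
      then have "h \<in> D" unfolding D_def using hK by simp
      then show "c \<in> phi ` D" using ph by blast
    qed
  qed
  have "card C = card D" using card_image[OF inj] img by simp
  then show ?thesis unfolding C_def D_def Q_def R_def .
qed

lemma finite_Q: "finite ({1..(n::nat)} // r)"
  unfolding quot_image by (rule finite_imageI) simp

lemma count_cover:
  assumes SF: "\<forall>F\<in>S. F \<subseteq> {1..n} \<and> F \<noteq> {}"
  shows "int (card {c \<in> {1..n} \<rightarrow>\<^sub>E {1..r+i}. (\<forall>F\<in>S. \<exists>x. \<forall>v\<in>F. c v = x) \<and> {r+1..r+i} \<subseteq> c ` {1..n}})
       = Tr r (ncomp n S) i"
  using comp_bij[OF SF, of "{1..r+i}" "{r+1..r+i}"] cover_count[OF finite_Q, of n "(Rel S)\<^sup>*" r i]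
  by (simp add: ncomp_Rel)

lemma count_plain:
  assumes SF: "\<forall>F\<in>S. F \<subseteq> {1..n} \<and> F \<noteq> {}"
  shows "card {c \<in> {1..n} \<rightarrow>\<^sub>E K. (\<forall>F\<in>S. \<exists>x. \<forall>v\<in>F. c v = x)} = card K ^ ncomp n S"
  using comp_bij[OF SF, of K "{}"] finite_Q[of n "(Rel S)\<^sup>*"]
  by (simp add: ncomp_Rel card_PiE)



lemma ncomp_empty: "ncomp n {} = n"
proof -
  have "Rel {} = {}" by (simp add: Rel_def)
  then have "{1..n} // (Rel {})\<^sup>* = (\<lambda>v. {v}) ` {1..n}" by (simp add: quot_image)
  then show ?thesis by (simp add: ncomp_Rel card_image)
qed

lemma ncomp_le: "ncomp n S \<le> n"
  unfolding ncomp_Rel quot_image using card_image_le[of "{1..n}"] by simp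

lemma ncomp_bound:
  assumes F: "F \<in> S" "F \<noteq> {}" "F \<subseteq> {1..n}"
  shows "ncomp n S + card F \<le> n + 1"
proof -
  define cls where "cls v = (Rel S)\<^sup>* `` {v}" for v
  obtain u where u: "u \<in> F" using F by auto
  have "cls v = cls u" if "v \<in> F" for v
  proof -
    have "(u, v) \<in> Rel S" using F u that unfolding Rel_def by auto
    then have "(u, v) \<in> (Rel S)\<^sup>*" by (rule r_into_rtrancl)
    then show ?thesis unfolding cls_def using equiv_class_eq_iff[OF equiv_Rel] by blast
  qed
  then have cF: "cls ` F = {cls u}" using u by blast
  have un: "{1..n} = ({1..n} - F) \<union> F" using F by blast
  have "cls ` {1..n} = cls ` ({1..n} - F) \<union> {cls u}"
    by (subst un, simp only: image_Un cF)
  then have "card (cls ` {1..n}) \<le> card (cls ` ({1..n} - F)) + 1"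
    using card_Un_le[of "cls ` ({1..n} - F)" "{cls u}"] by simp
  also have "\<dots> \<le> card ({1..n} - F) + 1" using card_image_le[of "{1..n} - F" cls] by simp
  also have "card ({1..n} - F) = n - card F" using F by (simp add: card_Diff_subset finite_subset)
  finally have "card (cls ` {1..n}) \<le> n - card F + 1" .
  moreover have "card F \<le> n" using F card_mono[of "{1..n}" F] by simp
  moreover have "ncomp n S = card (cls ` {1..n})" unfolding ncomp_Rel quot_image cls_def ..
  ultimately show ?thesis by linarith
qed

lemma uniq:
  fixes d :: "nat \<Rightarrow> int"
  assumes z: "\<forall>j>n. d j = 0" and s: "\<forall>x. (\<Sum>j\<le>n. d j * int (x choose j)) = 0"
  shows "d j = 0"
proof (induction j rule: less_induct)
  case (less j)
  show ?case
  proof (cases "j \<le> n")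
    case False then show ?thesis using z by simp
  next
    case True
    have "(\<Sum>l\<le>n. d l * int (j choose l)) = (\<Sum>l\<le>n. if l = j then d j else 0)"
    proof (rule sum.cong[OF refl])
      fix l assume "l \<in> {..n}"
      show "d l * int (j choose l) = (if l = j then d j else 0)"
      proof (cases "l < j")
        case True then show ?thesis using less by simp
      next
        case False then show ?thesis by (cases "l = j") auto
      qed
    qed
    also have "\<dots> = d j" using True by simp
    finally show ?thesis using s by simp
  qed
qed

lemma fvec_eq:
  assumes z: "\<forall>j>n. f j = 0" and e: "\<forall>k::nat. k \<ge> 1 \<longrightarrow> p k = (\<Sum>j\<le>n. f j * int ((k - 1) choose j))"
  shows "fvec n p = f"
  unfolding fvec_def
proof (rule the_equality)
  show "(\<forall>j>n. f j = 0) \<and> (\<forall>k. 1 \<le> k \<longrightarrow> p k = (\<Sum>j\<le>n. f j * int ((k - 1) choose j)))"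
    using z e by blast
next
  fix f' assume a: "(\<forall>j>n. f' j = 0) \<and> (\<forall>k. 1 \<le> k \<longrightarrow> p k = (\<Sum>j\<le>n. f' j * int ((k - 1) choose j)))"
  have "(\<lambda>j. f' j - f j) j = 0" for j
  proof (rule uniq[of n])
    show "\<forall>j>n. f' j - f j = 0" using a z by simp
    show "\<forall>x. (\<Sum>j\<le>n. (f' j - f j) * int (x choose j)) = 0"
    proof
      fix x
      have "p (Suc x) = (\<Sum>j\<le>n. f' j * int (x choose j))" "p (Suc x) = (\<Sum>j\<le>n. f j * int (x choose j))"
      proof -
        have "Suc x \<ge> 1" by simp
        then show "p (Suc x) = (\<Sum>j\<le>n. f' j * int (x choose j))" using a by (metis diff_Suc_1)
        show "p (Suc x) = (\<Sum>j\<le>n. f j * int (x choose j))" using e \<open>Suc x \<ge> 1\<close> by (metis diff_Suc_1)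
      qed
      then show "(\<Sum>j\<le>n. (f' j - f j) * int (x choose j)) = 0"
        by (simp add: left_diff_distrib sum_subtractf)
    qed
  qed
  then show "f' = f" by auto
qed



theorem mainTheorem8:
  fixes n :: nat and E :: "nat set set" and i m :: nat
  assumes H: "hypergraph_noloops n E"
    and i: "i \<le> n" and m: "m \<le> card E"
  shows "fvec n (\<lambda>k. int (chrom n E (k + 1))) i
           = (\<Sum>a=0..card E. (-1)^a * (\<Sum>b=0..n. int (scount n E a b) * Tcoef b i))
       \<and> (even m \<longrightarrow> fvec n (\<lambda>k. int (chrom n E (k + 1))) i
           \<le> (\<Sum>a=0..m. (-1)^a * (\<Sum>b=0..n. int (scount n E a b) * Tcoef b i)))
       \<and> (odd m \<longrightarrow> fvec n (\<lambda>k. int (chrom n E (k + 1))) i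
           \<ge> (\<Sum>a=0..m. (-1)^a * (\<Sum>b=0..n. int (scount n E a b) * Tcoef b i)))
       \<and> (E \<noteq> {} \<longrightarrow> n - Min (card ` E) + 2 \<le> i \<longrightarrow>
           fvec n (\<lambda>k. int (chrom n E (k + 1))) i
           = (\<Sum>j=0..i. (-1)^j * int (i choose j) * (int i - int j + 2)^n))"
proof -
  have hE: "\<forall>F\<in>E. F \<subseteq> {1..n} \<and> F \<noteq> {} \<and> card F \<noteq> 1"
    using H by (simp add: hypergraph_noloops_def)
  have fE: "finite E"
  proof (rule finite_subset)
    show "E \<subseteq> Pow {1..n}" using hE by auto
  qed simp
  have SFJ: "\<forall>F\<in>J. F \<subseteq> {1..n} \<and> F \<noteq> {}" if "J \<subseteq> E" for J
    using hE that by blast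
  define Js where "Js a = {J. J \<subseteq> E \<and> card J = a}" for a
  define G where "G j a = (\<Sum>J\<in>Js a. Tcoef (ncomp n J) j)" for j a
  define W where "W m j = (\<Sum>a=0..m. (-1)^a * (\<Sum>b=0..n. int (scount n E a b) * Tcoef b j))" for m j
  have fJs: "finite (Js a)" for a unfolding Js_def using fE by simp
  have Js0: "Js 0 = {{}}" unfolding Js_def using fE by (auto simp: card_eq_0_iff dest: rev_finite_subset)
  have sc: "scount n E a b = card {J\<in>Js a. ncomp n J = b}" for a b
  proof (cases "a = 0")
    case True
    have "{J\<in>Js a. ncomp n J = b} = (if b = n then {{}} else {})"
      using True Js0 ncomp_empty by auto
    then show ?thesis using True by (simp add: scount_def)
  next
    case False
    then show ?thesis by (simp add: scount_def Js_def)
  qed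
  have WG: "W m j = (\<Sum>a=0..m. (-1)^a * G j a)" for m j
    unfolding W_def
  proof (intro sum.cong refl)
    fix a
    have "G j a = (\<Sum>b\<in>{0..n}. \<Sum>J\<in>{J\<in>Js a. ncomp n J = b}. Tcoef (ncomp n J) j)"
      unfolding G_def using fJs ncomp_le by (intro sum.group[symmetric]) auto
    also have "\<dots> = (\<Sum>b\<in>{0..n}. int (scount n E a b) * Tcoef b j)"
      by (intro sum.cong refl) (simp add: sc)
    finally show "(-1)^a * (\<Sum>b=0..n. int (scount n E a b) * Tcoef b j) = (-1)^a * G j a" by simp
  qed
  define U where "U j = {c \<in> {1..n} \<rightarrow>\<^sub>E {1..2+j}. {2+1..2+j} \<subseteq> c ` {1..n}}" for j :: nat
  define A where "A F = {c::nat\<Rightarrow>nat. \<exists>x. \<forall>v\<in>F. c v = x}" for F :: "nat set"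
  define g where "g j = card {c\<in>U j. \<forall>F\<in>E. c \<notin> A F}" for j
  have fU: "finite (U j)" for j unfolding U_def by (simp add: finite_PiE)
  have NJ: "int (card {c\<in>U j. \<forall>F\<in>J. c \<in> A F}) = Tcoef (ncomp n J) j" if "J \<subseteq> E" for J j
  proof -
    have "{c\<in>U j. \<forall>F\<in>J. c \<in> A F} = {c \<in> {1..n} \<rightarrow>\<^sub>E {1..2+j}. (\<forall>F\<in>J. \<exists>x. \<forall>v\<in>F. c v = x) \<and> {2+1..2+j} \<subseteq> c ` {1..n}}"
      unfolding U_def A_def by auto
    then show ?thesis using count_cover[OF SFJ[OF that], of 2 j] by (simp add: Tcoef_Tr)
  qed
  have bon: "(\<Sum>a=0..m. (-1)^a * (\<Sum>J\<in>{J. J\<subseteq>E \<and> card J = a}. int (card {c\<in>U j. \<forall>F\<in>J. c\<in>A F}))) = W m j" for m j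
    unfolding WG G_def Js_def by (intro sum.cong refl) (simp add: NJ)
  have gW: "int (g j) = W (card E) j" for j
    using bonf_exact[OF fU fE, of j A] bon unfolding g_def by simp
  have gE: "even m \<Longrightarrow> int (g j) \<le> W m j" for m j
    using bonf_even[OF fU fE, of m j A] bon unfolding g_def by simp
  have gO: "odd m \<Longrightarrow> int (g j) \<ge> W m j" for m j
    using bonf_odd[OF fU fE, of m j A] bon unfolding g_def by simp
  have chromeq: "int (chrom n E (k+1)) = (\<Sum>a=0..card E. (-1)^a * (\<Sum>J\<in>Js a. (int (k+1))^ncomp n J))" for k
  proof -
    define V where "V = {1..n} \<rightarrow>\<^sub>E {1..k+1}"
    have fV: "finite V" unfolding V_def by (simp add: finite_PiE)
    have ch: "chrom n E (k+1) = card {c\<in>V. \<forall>F\<in>E. c \<notin> A F}"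
      unfolding chrom_def V_def A_def by simp
    have cJ: "int (card {c\<in>V. \<forall>F\<in>J. c \<in> A F}) = (int (k+1))^ncomp n J" if "J \<subseteq> E" for J
    proof -
      have "{c\<in>V. \<forall>F\<in>J. c \<in> A F} = {c \<in> {1..n} \<rightarrow>\<^sub>E {1..k+1}. (\<forall>F\<in>J. \<exists>x. \<forall>v\<in>F. c v = x)}"
        unfolding V_def A_def by auto
      then show ?thesis using count_plain[OF SFJ[OF that], of "{1..k+1}"] by simp
    qed
    have "(\<Sum>a=0..card E. (-1)^a * (\<Sum>J\<in>{J. J\<subseteq>E \<and> card J = a}. int (card {c\<in>V. \<forall>F\<in>J. c\<in>A F})))
       = (\<Sum>a=0..card E. (-1)^a * (\<Sum>J\<in>Js a. (int (k+1))^ncomp n J))"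
      unfolding Js_def by (intro sum.cong refl arg_cong2[where f="(*)"]) (auto simp: cJ)
    then show ?thesis using bonf_exact[OF fV fE, of A] ch by simp
  qed
  define f where "f j = (if j \<le> n then int (g j) else 0)" for j
  have expand: "int (chrom n E (k+1)) = (\<Sum>j\<le>n. f j * int ((k - 1) choose j))" if k: "k \<ge> 1" for k
  proof -
    let ?C = "\<lambda>j. int ((k - 1) choose j)"
    have "(\<Sum>j\<le>n. f j * ?C j) = (\<Sum>j\<le>n. (\<Sum>a=0..card E. (-1)^a * G j a) * ?C j)"
      by (intro sum.cong refl) (simp add: f_def gW WG)
    also have "\<dots> = (\<Sum>j\<le>n. \<Sum>a=0..card E. \<Sum>J\<in>Js a. (-1)^a * (Tcoef (ncomp n J) j * ?C j))"
      unfolding G_def by (simp add: sum_distrib_left sum_distrib_right algebra_simps)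
    also have "\<dots> = (\<Sum>a=0..card E. \<Sum>j\<le>n. \<Sum>J\<in>Js a. (-1)^a * (Tcoef (ncomp n J) j * ?C j))"
      by (rule sum.swap)
    also have "\<dots> = (\<Sum>a=0..card E. \<Sum>J\<in>Js a. \<Sum>j\<le>n. (-1)^a * (Tcoef (ncomp n J) j * ?C j))"
      by (intro sum.cong refl sum.swap)
    also have "\<dots> = (\<Sum>a=0..card E. \<Sum>J\<in>Js a. (-1)^a * (int (k+1))^ncomp n J)"
    proof (intro sum.cong refl)
      fix a J
      have "(int (k - 1) + int 2)^ncomp n J = (\<Sum>j\<le>n. Tr 2 (ncomp n J) j * ?C j)"
        by (rule newton[OF ncomp_le])
      moreover have "int (k - 1) + int 2 = int (k+1)" using k by simp
      ultimately show "(\<Sum>j\<le>n. (-1)^a * (Tcoef (ncomp n J) j * ?C j)) = (-1)^a * (int (k+1))^ncomp n J"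
        by (simp add: Tcoef_Tr sum_distrib_left)
    qed
    also have "\<dots> = int (chrom n E (k+1))"
      using chromeq by (simp add: sum_distrib_left)
    finally show ?thesis by simp
  qed
  have fv: "fvec n (\<lambda>k. int (chrom n E (k + 1))) = f"
  proof (rule fvec_eq)
    show "\<forall>j>n. f j = 0" by (simp add: f_def)
    show "\<forall>k::nat. k \<ge> 1 \<longrightarrow> int (chrom n E (k + 1)) = (\<Sum>j\<le>n. f j * int ((k - 1) choose j))"
      using expand by blast
  qed
  have fvi: "fvec n (\<lambda>k. int (chrom n E (k + 1))) i = int (g i)"
    using fv i by (simp add: f_def)
  have part4: "fvec n (\<lambda>k. int (chrom n E (k + 1))) i
           = (\<Sum>j=0..i. (-1)^j * int (i choose j) * (int i - int j + 2)^n)"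
    if ne: "E \<noteq> {}" and il: "n - Min (card ` E) + 2 \<le> i"
  proof -
    have G0: "G i a = 0" if a: "a \<ge> 1" for a
      unfolding G_def
    proof (intro sum.neutral ballI)
      fix J assume J: "J \<in> Js a"
      then have JE: "J \<subseteq> E" and cJ: "card J = a" unfolding Js_def by auto
      then obtain F where F: "F \<in> J" using a by fastforce
      have FE: "F \<in> E" using F JE by auto
      have b: "ncomp n J + card F \<le> n + 1" using ncomp_bound[OF F] hE FE by auto
      have "Min (card ` E) \<le> card F" using fE FE by (intro Min_le) auto
      moreover have "card F \<le> n" using hE FE card_mono[of "{1..n}" F] by auto
      ultimately have "ncomp n J < i" using b il by linarith
      then show "Tcoef (ncomp n J) i = 0" by (simp add: Tcoef_Tr Tr_zero)
    qed
    have "W (card E) i = (-1)^0 * G i 0 + (\<Sum>a=Suc 0..card E. (-1)^a * G i a)"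
      unfolding WG by (subst sum.atLeast_Suc_atMost) simp_all
    also have "\<dots> = G i 0" using G0 by simp
    also have "\<dots> = Tcoef n i" unfolding G_def Js0 by (simp add: ncomp_empty)
    finally show ?thesis using fvi gW by (simp add: Tcoef_def)
  qed
  show ?thesis
    using fvi gW gE gO part4 unfolding W_def by auto
qed


end
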